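(* Let $\{a_n\}_{n\in\mathbb Z}$ be i.i.d. random variables with values in $\{1,2,\dots\}$ with $\mathbb E[a_0]<\infty$ and $\mathbb P[a_0=1]>0$. Let $f(n)=n+a_n$ and let $T^f$ be the directed graph with vertex set $\mathbb Z$ and edge set $\{(n,f(n)):n\in\mathbb Z\}$. Then almost surely $T^f$ has only one connected component, i.e. for every $n\in\mathbb Z$ the set $C(n)=\{m\in\mathbb Z:\exists\, i,j\ge 0 \text{ with } f^i(n)=f^j(m)\}$ equals $\mathbb Z$.
   Context: $f^i$ denotes the $i$-th iterate of $f$, with $f^0$ the identity. *)

theory Defs
  imports "HOL-Probability.Probability"
begin

definition jump_map :: "(int \<Rightarrow> nat) \<Rightarrow> int \<Rightarrow> int" where
  "jump_map a n = n + int (a n)"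

definition comp_of :: "(int \<Rightarrow> int) \<Rightarrow> int \<Rightarrow> int set" where
  "comp_of f n = {m. \<exists>i j. (f ^^ i) n = (f ^^ j) m}"

end

theory Submission
  imports Defs
begin


lemma hit:
  assumes pos: "\<forall>k. 1 \<le> b k" and cut: "\<forall>j\<in>{x0..<c}. j + int (b j) \<le> c"
  shows "x0 \<le> x \<Longrightarrow> x \<le> c \<Longrightarrow> \<exists>i. (jump_map b ^^ i) x = c"
proof (induction "nat (c - x)" arbitrary: x rule: less_induct)
  case less
  show ?case
  proof (cases "x = c")
    case True then show ?thesis by (intro exI[of _ 0]) simp
  next
    case False
    define y where "y = jump_map b x"
    have xc: "x < c" using less.prems False by simp
    then have h1: "x + int (b x) \<le> c" using cut less.prems(1) by auto
    have h2: "1 \<le> b x" using pos by simp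
    have y: "x < y" "y \<le> c" using h1 h2 by (simp_all add: y_def jump_map_def)
    then obtain i where "(jump_map b ^^ i) y = c"
      using less.hyps[of y] less.prems by auto
    then have "(jump_map b ^^ Suc i) x = c"
      unfolding y_def by (simp only: funpow_Suc_right o_apply)
    then show ?thesis by blast
  qed
qed

lemma sum_reidx: "x0 \<le> c - int L \<Longrightarrow>
  (\<Sum>j\<in>{x0..<c - int L}. g (nat (c - j))) = (\<Sum>i\<in>{L<..nat (c - x0)}. (g i :: real))"
  by (rule sum.reindex_bij_witness[where i="\<lambda>i. c - int i" and j="\<lambda>j. nat (c - j)"]) auto

lemma prod_reidx:
  "(\<Prod>j\<in>{c - int L..<c}. g (nat (c - j))) = (\<Prod>i\<in>{1..L}. (g i :: real))"
  by (rule prod.reindex_bij_witness[where i="\<lambda>i. c - int i" and j="\<lambda>j. nat (c - j)"]) auto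

lemma weier: "finite S \<Longrightarrow> (\<forall>i\<in>S. 0 \<le> x i \<and> x i \<le> 1) \<Longrightarrow>
  1 - sum x S \<le> (\<Prod>i\<in>S. 1 - x i :: real)"
proof (induction S rule: finite_induct)
  case empty then show ?case by simp
next
  case (insert e S)
  have ih: "1 - sum x S \<le> (\<Prod>i\<in>S. 1 - x i)" using insert by auto
  have p0: "0 \<le> (\<Prod>i\<in>S. 1 - x i)" using insert by (intro prod_nonneg) auto
  have p1: "(\<Prod>i\<in>S. 1 - x i) \<le> 1" using insert by (intro prod_le_1) auto
  have xe: "0 \<le> x e" "x e \<le> 1" using insert by auto
  have "1 - sum x (insert e S) = (1 - sum x S) - x e" using insert by simp
  also have "\<dots> \<le> (\<Prod>i\<in>S. 1 - x i) - x e * (\<Prod>i\<in>S. 1 - x i)"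
    using ih xe mult_left_le[OF p1 xe(1)] by linarith
  also have "\<dots> = (\<Prod>i\<in>insert e S. 1 - x i)" using insert.hyps by (simp add: left_diff_distrib)
  finally show ?case .
qed

lemma tail_bound:
  fixes t :: "nat \<Rightarrow> real"
  assumes "summable t" "\<And>i. 0 \<le> t i"
  shows "sum t {n<..m} \<le> suminf t - sum t {..<Suc n}"
proof (cases "n \<le> m")
  case True
  have "{..<Suc m} = {..<Suc n} \<union> {n<..m}" using True by auto
  moreover have "sum t ({..<Suc n} \<union> {n<..m}) = sum t {..<Suc n} + sum t {n<..m}"
    by (rule sum.union_disjoint) auto
  ultimately have "sum t {..<Suc m} = sum t {..<Suc n} + sum t {n<..m}"
    by (simp only:)
  moreover have "sum t {..<Suc m} \<le> suminf t" using assms by (intro sum_le_suminf) auto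
  ultimately show ?thesis by simp
next
  case False
  then have "{n<..m} = {}" by auto
  moreover have "sum t {..<Suc n} \<le> suminf t" using assms by (intro sum_le_suminf) auto
  ultimately show ?thesis by simp
qed

lemma tail_lim:
  fixes t :: "nat \<Rightarrow> real"
  assumes "summable t"
  shows "(\<lambda>n. suminf t - sum t {..<Suc n}) \<longlonglongrightarrow> 0"
proof -
  have "(\<lambda>n. sum t {..<Suc n}) \<longlonglongrightarrow> suminf t"
    using summable_LIMSEQ[OF assms] by (rule LIMSEQ_Suc)
  then have "(\<lambda>n. suminf t - sum t {..<Suc n}) \<longlonglongrightarrow> suminf t - suminf t"
    by (intro tendsto_intros)
  then show ?thesis by simp
qed




locale jump_setup = prob_space M for M :: "'a measure" +
  fixes a :: "int \<Rightarrow> 'a \<Rightarrow> nat"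
  assumes rv[measurable]: "\<And>n. a n \<in> measurable M (count_space UNIV)"
    and indep: "indep_vars (\<lambda>_. count_space UNIV) a UNIV"
    and ident: "\<And>n. distr M (count_space UNIV) (a n) = distr M (count_space UNIV) (a 0)"
    and integ: "integrable M (\<lambda>\<omega>. real (a 0 \<omega>))"
    and one: "prob {\<omega> \<in> space M. a 0 \<omega> = 1} > 0"
begin

lemma pred_a[measurable]: "Measurable.pred M (\<lambda>\<omega>. P (a j \<omega>))"
  by (rule measurable_compose[OF rv]) simp

lemma G_meas: "{\<omega> \<in> space M. \<exists>c::int. mx \<le> c \<and> (\<forall>j\<in>{x0..<c}. j + int (a j \<omega>) \<le> c)} \<in> events"
  by measurable

lemma same_dist: "prob {\<omega> \<in> space M. a j \<omega> \<in> A} = prob {\<omega> \<in> space M. a 0 \<omega> \<in> A}"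
proof -
  have "measure (distr M (count_space UNIV) (a j)) A = measure (distr M (count_space UNIV) (a 0)) A"
    using ident[of j] by (rule arg_cong)
  then show ?thesis by (simp add: measure_distr vimage_def Int_def conj_commute)
qed

end


context jump_setup begin

definition t :: "nat \<Rightarrow> real" where "t i = prob {\<omega> \<in> space M. i < a 0 \<omega>}"

lemma cnt: "(\<Sum>i<K. (if i < (n::nat) then 1 else 0::real)) = real (min n K)"
proof -
  have "(\<Sum>i<K. (if i < n then 1 else 0::real)) = (\<Sum>i\<in>{..<min n K}. 1)"
    by (rule sum.mono_neutral_cong_right) auto
  then show ?thesis by simp
qed

lemma t_partial: "(\<Sum>i<K. t i) \<le> expectation (\<lambda>\<omega>. real (a 0 \<omega>))"
proof -
  have ev: "\<And>i. {\<omega> \<in> space M. i < a 0 \<omega>} \<in> events" by measurable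
  have "(\<Sum>i<K. t i) = (\<Sum>i<K. expectation (indicator {\<omega> \<in> space M. i < a 0 \<omega>}))"
    unfolding t_def using ev by (simp add: integral_indicator)
  also have "\<dots> = expectation (\<lambda>\<omega>. \<Sum>i<K. indicator {\<omega> \<in> space M. i < a 0 \<omega>} \<omega>)"
    by (rule sym, rule Bochner_Integration.integral_sum) (use ev in \<open>auto intro!: integrable_indicator simp: emeasure_eq_measure\<close>)
  also have "\<dots> \<le> expectation (\<lambda>\<omega>. real (a 0 \<omega>))"
  proof (rule integral_mono)
    show "integrable M (\<lambda>\<omega>. \<Sum>i<K. indicator {\<omega> \<in> space M. i < a 0 \<omega>} \<omega> :: real)"
      using ev by (intro Bochner_Integration.integrable_sum) (auto intro!: integrable_indicator simp: emeasure_eq_measure)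
    show "integrable M (\<lambda>\<omega>. real (a 0 \<omega>))" by (rule integ)
    fix \<omega> assume "\<omega> \<in> space M"
    then have "(\<Sum>i<K. indicator {\<omega> \<in> space M. i < a 0 \<omega>} \<omega> :: real) = (\<Sum>i<K. (if i < a 0 \<omega> then 1 else 0))"
      by (intro sum.cong) (auto simp: indicator_def)
    also have "\<dots> = real (min (a 0 \<omega>) K)" by (rule cnt)
    finally show "(\<Sum>i<K. indicator {\<omega> \<in> space M. i < a 0 \<omega>} \<omega> :: real) \<le> real (a 0 \<omega>)" by simp
  qed
  finally show ?thesis .
qed

lemma t_nonneg: "0 \<le> t i" by (simp add: t_def)

lemma t_summable: "summable t"
  using t_partial t_nonneg by (intro summableI_nonneg_bounded) auto

end


context jump_setup begin

lemma P0: "prob {\<omega> \<in> space M. a j \<omega> \<le> s} = 1 - t s"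
proof -
  have "prob {\<omega> \<in> space M. a j \<omega> \<le> s} = prob {\<omega> \<in> space M. a j \<omega> \<in> {..s}}" by simp
  also have "\<dots> = prob {\<omega> \<in> space M. a 0 \<omega> \<in> {..s}}" by (rule same_dist)
  also have "{\<omega> \<in> space M. a 0 \<omega> \<in> {..s}} = space M - {\<omega> \<in> space M. s < a 0 \<omega>}" by auto
  also have "prob \<dots> = 1 - t s" unfolding t_def by (rule prob_compl) measurable
  finally show ?thesis .
qed

lemma Pgt: "prob {\<omega> \<in> space M. s < a j \<omega>} = t s"
proof -
  have "prob {\<omega> \<in> space M. s < a j \<omega>} = prob {\<omega> \<in> space M. a j \<omega> \<in> {s<..}}" by simp
  also have "\<dots> = prob {\<omega> \<in> space M. a 0 \<omega> \<in> {s<..}}" by (rule same_dist)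
  finally show ?thesis by (simp add: t_def)
qed

lemma t_le1: "t i \<le> 1" by (simp add: t_def)

lemma p_le: "1 \<le> s \<Longrightarrow> prob {\<omega> \<in> space M. a 0 \<omega> = 1} \<le> 1 - t s"
proof -
  assume "1 \<le> s"
  then have "{\<omega> \<in> space M. a 0 \<omega> = 1} \<subseteq> {\<omega> \<in> space M. a 0 \<omega> \<le> s}" by auto
  then have "prob {\<omega> \<in> space M. a 0 \<omega> = 1} \<le> prob {\<omega> \<in> space M. a 0 \<omega> \<le> s}"
    by (intro finite_measure_mono) measurable
  then show ?thesis using P0[of 0 s] by simp
qed

lemma W_prob:
  assumes "1 \<le> L"
  shows "prob {\<omega> \<in> space M. \<forall>j\<in>{c - int L..<c}. a j \<omega> \<le> nat (c - j)} = (\<Prod>i\<in>{1..L}. 1 - t i)"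
proof -
  let ?B = "{c - int L..<c}"
  have ne: "?B \<noteq> {}" using assms by auto
  have "{\<omega> \<in> space M. \<forall>j\<in>?B. a j \<omega> \<le> nat (c - j)} = (\<Inter>j\<in>?B. a j -` {..nat (c - j)} \<inter> space M)"
    using ne by auto
  then have "prob {\<omega> \<in> space M. \<forall>j\<in>?B. a j \<omega> \<le> nat (c - j)} = (\<Prod>j\<in>?B. prob (a j -` {..nat (c - j)} \<inter> space M))"
    using indep_varsD[OF indep ne] by simp
  also have "\<dots> = (\<Prod>j\<in>?B. 1 - t (nat (c - j)))"
  proof (rule prod.cong)
    fix j
    have "a j -` {..nat (c - j)} \<inter> space M = {\<omega> \<in> space M. a j \<omega> \<le> nat (c - j)}" by auto
    then show "prob (a j -` {..nat (c - j)} \<inter> space M) = 1 - t (nat (c - j))" using P0 by simp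
  qed simp
  also have "\<dots> = (\<Prod>i\<in>{1..L}. 1 - t i)" by (rule prod_reidx)
  finally show ?thesis .
qed

lemma prod_lower:
  assumes "N \<le> L" "sum t {N<..L} \<le> 1/2"
  shows "prob {\<omega> \<in> space M. a 0 \<omega> = 1} ^ N / 2 \<le> (\<Prod>i\<in>{1..L}. 1 - t i)"
proof -
  let ?p = "prob {\<omega> \<in> space M. a 0 \<omega> = 1}"
  have split: "{1..L} = {1..N} \<union> {N<..L}" using assms by auto
  have "(\<Prod>i\<in>{1..L}. 1 - t i) = (\<Prod>i\<in>{1..N}. 1 - t i) * (\<Prod>i\<in>{N<..L}. 1 - t i)"
    unfolding split by (rule prod.union_disjoint) auto
  moreover have "?p ^ N \<le> (\<Prod>i\<in>{1..N}. 1 - t i)"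
  proof -
    have "(\<Prod>i\<in>{1..N}. ?p) \<le> (\<Prod>i\<in>{1..N}. 1 - t i)"
    proof (rule prod_mono)
      fix i assume "i \<in> {1..N}"
      then show "0 \<le> ?p \<and> ?p \<le> 1 - t i" using p_le[of i] by simp
    qed
    then show ?thesis by simp
  qed
  moreover have "1/2 \<le> (\<Prod>i\<in>{N<..L}. 1 - t i)"
    using weier[of "{N<..L}" t] t_nonneg t_le1 assms(2) by auto
  moreover have "0 \<le> ?p ^ N" by simp
  moreover have "0 \<le> (\<Prod>i\<in>{1..N}. 1 - t i)" by (intro prod_nonneg) (use t_le1 in auto)
  ultimately show ?thesis
    using mult_mono[of "?p ^ N" "(\<Prod>i\<in>{1..N}. 1 - t i)" "1/2" "(\<Prod>i\<in>{N<..L}. 1 - t i)"]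
    by (simp del: One_nat_def)
qed

end


context jump_setup begin

lemma blocks_disj:
  "disjoint_family_on (\<lambda>k::nat. {mx + int k * int L - int L..<mx + int k * int L}) UNIV"
proof (unfold disjoint_family_on_def, intro ballI impI)
  fix k k' :: nat assume "k \<noteq> k'"
  have key: "int k * int L + int L \<le> int k' * int L" if "k < k'" for k k' :: nat
  proof -
    have "(int k + 1) * int L \<le> int k' * int L" using that by (intro mult_right_mono) auto
    then show ?thesis by (simp add: distrib_right)
  qed
  show "{mx + int k * int L - int L..<mx + int k * int L} \<inter> {mx + int k' * int L - int L..<mx + int k' * int L} = {}"
    using key[of k k'] key[of k' k] \<open>k \<noteq> k'\<close> by (cases "k < k'") auto
qed

lemma bad_small:
  assumes x0: "x0 \<le> mx" and dpos: "0 < \<delta>"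
  shows "prob (space M - {\<omega> \<in> space M. \<exists>c. mx \<le> c \<and> (\<forall>j\<in>{x0..<c}. j + int (a j \<omega>) \<le> c)}) < \<delta>"
proof -
  let ?G = "{\<omega> \<in> space M. \<exists>c. mx \<le> c \<and> (\<forall>j\<in>{x0..<c}. j + int (a j \<omega>) \<le> c)}"
  define p where "p = prob {\<omega> \<in> space M. a 0 \<omega> = 1}"
  have p0: "0 < p" using one by (simp add: p_def)
  have p1: "p \<le> 1" by (simp add: p_def)
  define T where "T n = suminf t - sum t {..<Suc n}" for n
  have Tlim: "T \<longlonglongrightarrow> 0" unfolding T_def by (rule tail_lim[OF t_summable])
  have Tb: "sum t {n<..m} \<le> T n" for n m unfolding T_def by (rule tail_bound[OF t_summable t_nonneg])
  obtain N where N: "T N < 1/2"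
    using order_tendstoD(2)[OF Tlim, of "1/2"] by (auto simp: eventually_sequentially)
  define q where "q = p ^ N / 2"
  have q0: "0 < q" using p0 by (simp add: q_def)
  have q1: "q \<le> 1/2" using p0 p1 by (simp add: q_def power_le_one)
  have "(\<lambda>n. (1 - q) ^ n) \<longlonglongrightarrow> 0" using q0 q1 by (intro LIMSEQ_power_zero) auto
  then obtain K0 where K0: "\<forall>n\<ge>K0. (1 - q) ^ n < \<delta> / 2"
    using order_tendstoD(2)[of _ 0 sequentially "\<delta>/2"] dpos by (auto simp: eventually_sequentially)
  define K where "K = Suc K0"
  have K: "(1 - q) ^ K < \<delta> / 2" "1 \<le> K"
    by (rule K0[rule_format]) (simp_all add: K_def)
  obtain L0 where L0: "\<forall>n\<ge>L0. T n < \<delta> / (2 * real K)"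
    using order_tendstoD(2)[OF Tlim, of "\<delta> / (2 * real K)"] dpos K(2)
    by (auto simp: eventually_sequentially)
  define L where "L = max (max L0 N) 1"
  have L: "1 \<le> L" "N \<le> L" "L0 \<le> L" by (auto simp: L_def)
  define c where "c k = mx + int k * int L" for k :: nat
  define B where "B k = {c k - int L..<c k}" for k
  define W where "W k = {\<omega> \<in> space M. \<forall>j\<in>B k. a j \<omega> \<le> nat (c k - j)}" for k
  define H where "H k = {\<omega> \<in> space M. \<forall>j\<in>{x0..<c k - int L}. a j \<omega> \<le> nat (c k - j)}" for k
  have Wev: "W k \<in> events" for k unfolding W_def by measurable
  have Hev: "H k \<in> events" for k unfolding H_def by measurable
  have Gev: "?G \<in> events" by (rule G_meas)
  have cge: "mx \<le> c k - int L" if "1 \<le> k" for k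
  proof -
    have "int L \<le> int k * int L" using that by (simp add: mult_le_cancel_right1)
    then show ?thesis by (simp add: c_def)
  qed
  have incl: "space M - ?G \<subseteq> (\<Inter>k\<in>{1..K}. space M - W k) \<union> (\<Union>k\<in>{1..K}. space M - H k)"
  proof
    fix \<omega> assume \<omega>: "\<omega> \<in> space M - ?G"
    show "\<omega> \<in> (\<Inter>k\<in>{1..K}. space M - W k) \<union> (\<Union>k\<in>{1..K}. space M - H k)"
    proof (rule ccontr)
      assume "\<not> ?thesis"
      then obtain k where k: "k \<in> {1..K}" "\<omega> \<in> W k" and Hall: "\<omega> \<in> H k" using \<omega> K(2) by auto
      have "mx \<le> c k" using cge[of k] k(1) by auto
      moreover have "\<forall>j\<in>{x0..<c k}. j + int (a j \<omega>) \<le> c k"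
      proof
        fix j assume j: "j \<in> {x0..<c k}"
        show "j + int (a j \<omega>) \<le> c k"
        proof (cases "j < c k - int L")
          case True
          then have "a j \<omega> \<le> nat (c k - j)" using Hall j by (auto simp: H_def)
          then show ?thesis using j by (auto simp: le_nat_iff)
        next
          case False
          then have "a j \<omega> \<le> nat (c k - j)" using k(2) j by (auto simp: W_def B_def)
          then show ?thesis using j by (auto simp: le_nat_iff)
        qed
      qed
      ultimately show False using \<omega> by auto
    qed
  qed
  define Y where "Y k \<omega> = restrict (\<lambda>j. a j \<omega>) (B k)" for k \<omega>
  have indY: "indep_vars (\<lambda>k. PiM (B k) (\<lambda>_. count_space UNIV)) Y UNIV"
  proof -
    have "disjoint_family_on B UNIV" using blocks_disj[of mx L] unfolding B_def c_def .
    then show ?thesis unfolding Y_def by (intro indep_vars_restrict[OF indep]) auto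
  qed
  define A where "A k = space (PiM (B k) (\<lambda>_. count_space UNIV :: nat measure)) - PiE (B k) (\<lambda>j. {..nat (c k - j)})" for k
  have Aset: "A k \<in> sets (PiM (B k) (\<lambda>_. count_space UNIV))" for k
    unfolding A_def by (intro sets.compl_sets sets_PiM_I_finite) (auto simp: B_def)
  have YA: "Y k -` A k \<inter> space M = space M - W k" for k
    by (auto simp: Y_def A_def W_def space_PiM PiE_def Pi_def)
  have "prob (\<Inter>k\<in>{1..K}. space M - W k) = prob (\<Inter>k\<in>{1..K}. Y k -` A k \<inter> space M)"
    by (simp add: YA)
  also have "\<dots> = (\<Prod>k\<in>{1..K}. prob (Y k -` A k \<inter> space M))"
    using K(2) by (intro indep_varsD[OF indY] Aset) auto
  also have "\<dots> = (\<Prod>k\<in>{1..K}. 1 - prob (W k))"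
    by (simp add: YA prob_compl Wev)
  also have "\<dots> \<le> (\<Prod>k\<in>{1..K}. 1 - q)"
  proof (rule prod_mono)
    fix k
    have "prob (W k) = (\<Prod>i\<in>{1..L}. 1 - t i)"
      unfolding W_def B_def by (rule W_prob[OF L(1)])
    moreover have "sum t {N<..L} \<le> 1/2" using Tb[of N L] N by simp
    ultimately have "q \<le> prob (W k)" using prod_lower[OF L(2)] by (simp add: q_def p_def)
    then show "0 \<le> 1 - prob (W k) \<and> 1 - prob (W k) \<le> 1 - q" by simp
  qed
  also have "\<dots> = (1 - q) ^ K" by simp
  finally have part1: "prob (\<Inter>k\<in>{1..K}. space M - W k) < \<delta> / 2" using K(1) by simp
  have Hk: "prob (space M - H k) \<le> T L" if k: "k \<in> {1..K}" for k
  proof -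
    have ck: "x0 \<le> c k - int L" using cge[of k] k x0 by auto
    have "space M - H k = (\<Union>j\<in>{x0..<c k - int L}. {\<omega> \<in> space M. nat (c k - j) < a j \<omega>})"
      by (auto simp: H_def)
    moreover have ev: "\<And>j. {\<omega> \<in> space M. nat (c k - j) < a j \<omega>} \<in> events" by measurable
    ultimately have "prob (space M - H k) \<le> (\<Sum>j\<in>{x0..<c k - int L}. prob {\<omega> \<in> space M. nat (c k - j) < a j \<omega>})"
      by (simp only:) (rule finite_measure_subadditive_finite, auto)
    also have "\<dots> = (\<Sum>j\<in>{x0..<c k - int L}. t (nat (c k - j)))" by (simp add: Pgt)
    also have "\<dots> = (\<Sum>i\<in>{L<..nat (c k - x0)}. t i)" by (rule sum_reidx[OF ck])
    also have "\<dots> \<le> T L" by (rule Tb)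
    finally show ?thesis .
  qed
  have "prob (\<Union>k\<in>{1..K}. space M - H k) \<le> (\<Sum>k\<in>{1..K}. prob (space M - H k))"
    by (intro finite_measure_subadditive_finite) (auto intro: Hev)
  also have "\<dots> \<le> (\<Sum>k\<in>{1..K}. T L)" by (intro sum_mono Hk)
  also have "\<dots> = real K * T L" by simp
  also have "\<dots> < real K * (\<delta> / (2 * real K))"
    using L0 L(3) K(2) by (intro mult_strict_left_mono) auto
  also have "\<dots> = \<delta> / 2" using K(2) by simp
  finally have part2: "prob (\<Union>k\<in>{1..K}. space M - H k) < \<delta> / 2" .
  have e1: "(\<Inter>k\<in>{1..K}. space M - W k) \<in> events"
    using K(2) by (intro sets.finite_INT) (auto intro: Wev)
  have e2: "(\<Union>k\<in>{1..K}. space M - H k) \<in> events"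
    by (intro sets.finite_UN) (auto intro: Hev)
  have "prob (space M - ?G) \<le> prob ((\<Inter>k\<in>{1..K}. space M - W k) \<union> (\<Union>k\<in>{1..K}. space M - H k))"
    by (rule finite_measure_mono[OF incl]) (intro sets.Un e1 e2)
  also have "\<dots> \<le> prob (\<Inter>k\<in>{1..K}. space M - W k) + prob (\<Union>k\<in>{1..K}. space M - H k)"
    by (rule measure_Un_le[OF e1 e2])
  finally show ?thesis using part1 part2 by simp
qed

end


context jump_setup begin

lemma AE_good: "AE \<omega> in M. \<forall>x0 mx. x0 \<le> mx \<longrightarrow> (\<exists>c. mx \<le> c \<and> (\<forall>j\<in>{x0..<c}. j + int (a j \<omega>) \<le> c))"
proof -
  have "AE \<omega> in M. x0 \<le> mx \<longrightarrow> (\<exists>c. mx \<le> c \<and> (\<forall>j\<in>{x0..<c}. j + int (a j \<omega>) \<le> c))" for x0 mx :: int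
  proof (cases "x0 \<le> mx")
    case False then show ?thesis by simp
  next
    case True
    let ?G = "{\<omega> \<in> space M. \<exists>c. mx \<le> c \<and> (\<forall>j\<in>{x0..<c}. j + int (a j \<omega>) \<le> c)}"
    have ev: "space M - ?G \<in> events" by (rule sets.compl_sets[OF G_meas])
    have lt: "prob (space M - ?G) < \<delta>" if "0 < \<delta>" for \<delta>
      by (rule bad_small[OF True that])
    have "prob (space M - ?G) \<le> 0"
    proof (rule ccontr)
      assume "\<not> prob (space M - ?G) \<le> 0"
      then have "0 < prob (space M - ?G)" by simp
      from lt[OF this] show False by simp
    qed
    then have "prob (space M - ?G) = 0" by (intro order.antisym) simp_all
    then have "emeasure M (space M - ?G) = 0" by (simp add: emeasure_eq_measure)
    then show ?thesis by (intro AE_I[OF _ _ ev]) auto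
  qed
  then show ?thesis by (simp add: AE_all_countable)
qed

end

theorem mainTheorem7:
  fixes M :: "'a measure" and a :: "int \<Rightarrow> 'a \<Rightarrow> nat"
  assumes "prob_space M"
    and rv: "\<And>n. a n \<in> measurable M (count_space UNIV)"
    and indep: "prob_space.indep_vars M (\<lambda>_. count_space UNIV) a UNIV"
    and ident: "\<And>n. distr M (count_space UNIV) (a n) = distr M (count_space UNIV) (a 0)"
    and pos: "\<And>n. AE \<omega> in M. a n \<omega> \<ge> 1"
    and integ: "integrable M (\<lambda>\<omega>. real (a 0 \<omega>))"
    and one: "measure M {\<omega> \<in> space M. a 0 \<omega> = 1} > 0"
  shows "AE \<omega> in M. \<forall>n. comp_of (jump_map (\<lambda>k. a k \<omega>)) n = UNIV"
proof -
  interpret jump_setup M a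
    by (rule jump_setup.intro[OF assms(1)], unfold_locales) (use rv indep ident integ one in auto)
  have posall: "AE \<omega> in M. \<forall>k. 1 \<le> a k \<omega>"
    using pos by (simp add: AE_all_countable)
  show ?thesis
    using AE_good posall
  proof eventually_elim
    case (elim \<omega>)
    show ?case
    proof (intro allI)
      fix n
      show "comp_of (jump_map (\<lambda>k. a k \<omega>)) n = UNIV"
      proof (intro set_eqI iffI)
        fix m :: int
        have mm: "min n m \<le> max n m" by simp
        from elim(1)[rule_format, OF mm] obtain c where
          c: "max n m \<le> c" "\<forall>j\<in>{min n m..<c}. j + int (a j \<omega>) \<le> c"
          by blast
        obtain i where i: "(jump_map (\<lambda>k. a k \<omega>) ^^ i) n = c"
          using hit[of "\<lambda>k. a k \<omega>" "min n m" c n] elim(2) c by auto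
        obtain j where j: "(jump_map (\<lambda>k. a k \<omega>) ^^ j) m = c"
          using hit[of "\<lambda>k. a k \<omega>" "min n m" c m] elim(2) c by auto
        show "m \<in> comp_of (jump_map (\<lambda>k. a k \<omega>)) n"
          unfolding comp_of_def using i j by (metis (mono_tags, lifting) mem_Collect_eq)
      qed simp
    qed
  qed
qed

end
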